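(* Let $T>0$, $p>1$, $\beta>0$, and let $\varphi,\omega\in L^2(\mathbb{R})$. Let $w=R_\beta\varphi$ and $v=R_\beta\omega$ be the regularized solutions corresponding to the final values $\varphi$ and $\omega$, respectively. Then for every $t\in[0,T]$, $$\|w(\cdot,t)-v(\cdot,t)\|\le \beta^{\frac{t-T}{pT}}\,\|\varphi-\omega\|.$$
   Context: $\|\cdot\|$ denotes the norm of $L^2(\mathbb{R})$. The Fourier transform is $\hat\psi(\xi)=\frac{1}{\sqrt{2\pi}}\int_{-\infty}^{\infty}\psi(x)e^{-i\xi x}\,dx$ (extended to $L^2(\mathbb{R})$ as a unitary map). Fix $T>0$, $p>1$, $\beta>0$. For $\psi\in L^2(\mathbb{R})$, the regularized solution $R_\beta\psi$ is the function $(x,t)\mapsto (R_\beta\psi)(x,t)$, $t\in[0,T]$, whose Fourier transform in $x$ is $$\widehat{(R_\beta\psi)}(\xi,t)=\frac{e^{-t\xi^2}}{\beta e^{(p-1)T\xi^2}+e^{-T\xi^2}}\,\hat\psi(\xi)=\frac{e^{(T-t)\xi^2}}{1+\beta e^{pT\xi^2}}\,\hat\psi(\xi).$$ *)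

theory Defs
  imports "HOL-Analysis.Analysis"
begin

definition L2 :: "(real \<Rightarrow> complex) \<Rightarrow> bool" where
  "L2 f \<longleftrightarrow> f \<in> borel_measurable lborel \<and> integrable lborel (\<lambda>x. (cmod (f x))\<^sup>2)"

definition L2norm :: "(real \<Rightarrow> complex) \<Rightarrow> real" where
  "L2norm f = sqrt (\<integral>x. (cmod (f x))\<^sup>2 \<partial>lborel)"

definition fourier_L1 :: "(real \<Rightarrow> complex) \<Rightarrow> real \<Rightarrow> complex" where
  "fourier_L1 f \<xi> = complex_of_real (1 / sqrt (2 * pi)) *
      (\<integral>x. f x * exp (- \<i> * complex_of_real (\<xi> * x)) \<partial>lborel)"

text \<open>The unitary L2 extension (Plancherel): g is the L2 Fourier transform of f
  iff the Fourier transforms of the truncations of f to [-n,n] converge to g in L2.\<close>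

definition fourier_L2 :: "(real \<Rightarrow> complex) \<Rightarrow> (real \<Rightarrow> complex) \<Rightarrow> bool" where
  "fourier_L2 f g \<longleftrightarrow> L2 f \<and> L2 g \<and>
     (\<lambda>n::nat. L2norm (\<lambda>\<xi>. fourier_L1 (\<lambda>x. indicator {- real n .. real n} x * f x) \<xi> - g \<xi>))
        \<longlonglongrightarrow> 0"

text \<open>W is the regularized solution R_beta psi: for each t in [0,T], the Fourier
  transform in x of W(.,t) is exp((T-t) xi^2)/(1 + beta exp(p T xi^2)) times that of psi.\<close>

definition reg_solution :: "real \<Rightarrow> real \<Rightarrow> real \<Rightarrow> (real \<Rightarrow> complex) \<Rightarrow> (real \<Rightarrow> real \<Rightarrow> complex) \<Rightarrow> bool" where
  "reg_solution T p \<beta> \<psi> W \<longleftrightarrow> (\<exists>\<psi>h. fourier_L2 \<psi> \<psi>h \<and>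
     (\<forall>t\<in>{0..T}. fourier_L2 (\<lambda>x. W x t)
        (\<lambda>\<xi>. complex_of_real (exp ((T - t) * \<xi>\<^sup>2) / (1 + \<beta> * exp (p * T * \<xi>\<^sup>2))) * \<psi>h \<xi>)))"

end

theory Submission
  imports Defs "HOL-Probability.Probability"
begin

definition NN :: "(real \<Rightarrow> complex) \<Rightarrow> ennreal" where
  "NN f = (\<integral>\<^sup>+x. ennreal ((cmod (f x))\<^sup>2) \<partial>lborel)"

lemma L2_meas: "L2 f \<Longrightarrow> f \<in> borel_measurable borel"
  by (simp add: L2_def)

lemma L2norm_NN: "f \<in> borel_measurable borel \<Longrightarrow> L2norm f = sqrt (enn2real (NN f))"
  unfolding L2norm_def NN_def
  by (subst integral_eq_nn_integral) auto

lemma L2_iff: "L2 f \<longleftrightarrow> f \<in> borel_measurable borel \<and> NN f < \<infinity>"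
  unfolding L2_def NN_def integrable_iff_bounded by auto

lemma NN_nonneg_fin: "L2 f \<Longrightarrow> NN f < \<infinity>" by (simp add: L2_iff)

lemma ennreal_sq: "(ennreal a)^2 = ennreal (a^2)" if "a \<ge> 0" for a::real
  using that by (simp add: ennreal_power)

lemma sq2: "(a+b)^2 \<le> 2*a^2 + 2*b^2" for a b :: real
proof -
  have "0 \<le> (a-b)^2" by simp
  then show ?thesis by (simp add: power2_eq_square algebra_simps)
qed

lemma sq3: "(a+b+c)^2 \<le> 3*a^2 + 3*b^2 + 3*c^2" for a b c :: real
proof -
  have "0 \<le> (a-b)^2" "0 \<le> (b-c)^2" "0 \<le> (a-c)^2" by simp_all
  then show ?thesis by (simp add: power2_eq_square algebra_simps)
qed

lemma CS:
  assumes [measurable]: "f \<in> borel_measurable borel" "g \<in> borel_measurable borel"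
  shows "(\<integral>\<^sup>+x. ennreal (cmod (f x) * cmod (g x)) \<partial>lborel)\<^sup>2 \<le> NN f * NN g"
proof -
  have "(\<integral>\<^sup>+x. ennreal (cmod (f x)) * ennreal (cmod (g x)) \<partial>lborel)\<^sup>2 \<le>
     (\<integral>\<^sup>+x. (ennreal (cmod (f x)))^2 \<partial>lborel) * (\<integral>\<^sup>+x. (ennreal (cmod (g x)))^2 \<partial>lborel)"
    by (rule Cauchy_Schwarz_nn_integral) auto
  then show ?thesis unfolding NN_def by (simp add: ennreal_mult ennreal_sq)
qed

lemma NN_diff_le: 
  assumes [measurable]: "f \<in> borel_measurable borel" "g \<in> borel_measurable borel"
  shows "NN (\<lambda>x. f x - g x) \<le> 2 * NN f + 2 * NN g"
proof -
  have "NN (\<lambda>x. f x - g x) \<le> (\<integral>\<^sup>+x. ennreal (2 * (cmod (f x))\<^sup>2) + ennreal (2 * (cmod (g x))\<^sup>2) \<partial>lborel)"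
    unfolding NN_def
  proof (intro nn_integral_mono)
    fix x
    have "(cmod (f x - g x))\<^sup>2 \<le> (cmod (f x) + cmod (g x))\<^sup>2"
      by (intro power_mono norm_triangle_ineq4) auto
    also have "\<dots> \<le> 2 * (cmod (f x))\<^sup>2 + 2 * (cmod (g x))\<^sup>2"
      by (rule sq2)
    finally show "ennreal ((cmod (f x - g x))\<^sup>2) \<le> ennreal (2 * (cmod (f x))\<^sup>2) + ennreal (2 * (cmod (g x))\<^sup>2)"
      by (simp add: ennreal_plus[symmetric] del: ennreal_plus)
  qed
  also have "\<dots> = 2 * NN f + 2 * NN g" unfolding NN_def
    by (subst nn_integral_add) (auto simp: ennreal_mult nn_integral_cmult)
  finally show ?thesis .
qed

lemma NN_diff3_le:
  assumes [measurable]: "f \<in> borel_measurable borel" "g \<in> borel_measurable borel" "h \<in> borel_measurable borel"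
  shows "NN (\<lambda>x. f x + g x + h x) \<le> 3 * NN f + 3 * NN g + 3 * NN h"
proof -
  have "NN (\<lambda>x. f x + g x + h x) \<le> (\<integral>\<^sup>+x. ennreal (3 * (cmod (f x))\<^sup>2) + ennreal (3 * (cmod (g x))\<^sup>2) + ennreal (3 * (cmod (h x))\<^sup>2) \<partial>lborel)"
    unfolding NN_def
  proof (intro nn_integral_mono)
    fix x
    have "(cmod (f x + g x + h x))\<^sup>2 \<le> (cmod (f x) + cmod (g x) + cmod (h x))\<^sup>2"
      by (intro power_mono) (auto intro: order.trans[OF norm_triangle_ineq] add_mono)
    also have "\<dots> \<le> 3 * (cmod (f x))\<^sup>2 + 3 * (cmod (g x))\<^sup>2 + 3 * (cmod (h x))\<^sup>2"
      by (rule sq3)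
    finally show "ennreal ((cmod (f x + g x + h x))\<^sup>2) \<le> ennreal (3 * (cmod (f x))\<^sup>2) + ennreal (3 * (cmod (g x))\<^sup>2) + ennreal (3 * (cmod (h x))\<^sup>2)"
      by (simp add: ennreal_plus[symmetric] del: ennreal_plus)
  qed
  also have "\<dots> = 3 * NN f + 3 * NN g + 3 * NN h" unfolding NN_def
    by (subst nn_integral_add, simp, simp)+ (auto simp: ennreal_mult nn_integral_cmult)
  finally show ?thesis .
qed

lemma L2_diff: "L2 f \<Longrightarrow> L2 g \<Longrightarrow> L2 (\<lambda>x. f x - g x)"
  using NN_diff_le[of f g] unfolding L2_iff
  by (auto simp: ennreal_mult_less_top intro: le_less_trans)

lemma NN_shift: "f \<in> borel_measurable borel \<Longrightarrow> NN (\<lambda>y. f (y + u)) = NN f"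
  unfolding NN_def
  using nn_integral_real_affine[of "\<lambda>x. ennreal ((cmod (f x))\<^sup>2)" 1 u]
  by (simp add: add.commute)

lemma cont_support_shift:
  fixes g :: "real \<Rightarrow> complex"
  assumes cg: "continuous_on UNIV g" and R: "R \<ge> 0" and supp: "\<And>x. R < \<bar>x\<bar> \<Longrightarrow> g x = 0"
    and e: "e > 0"
  shows "\<exists>d>0. \<forall>u. \<bar>u\<bar> < d \<longrightarrow> NN (\<lambda>y. g (y + u) - g y) \<le> ennreal e"
proof -
  define \<eta> where "\<eta> = sqrt (e / (2*R+2))"
  have \<eta>: "\<eta> > 0" using e R by (simp add: \<eta>_def)
  have \<eta>2: "\<eta>^2 * (2*R+2) = e" using e R by (simp add: \<eta>_def)
  have "uniformly_continuous_on {-R-2..R+2} g"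
    by (rule compact_uniformly_continuous) (auto intro: continuous_on_subset[OF cg])
  then obtain d0 where d0: "d0 > 0" and
    d0': "\<And>x x'. x \<in> {-R-2..R+2} \<Longrightarrow> x' \<in> {-R-2..R+2} \<Longrightarrow> dist x' x < d0 \<Longrightarrow> dist (g x') (g x) < \<eta>"
    unfolding uniformly_continuous_on_def using \<eta> by metis
  have gm[measurable]: "g \<in> borel_measurable borel"
    using cg by (rule borel_measurable_continuous_onI)
  show ?thesis
  proof (intro exI[of _ "min d0 1"] conjI allI impI)
    show "min d0 1 > 0" using d0 by simp
    fix u :: real assume u: "\<bar>u\<bar> < min d0 1"
    have pt: "ennreal ((cmod (g (y + u) - g y))\<^sup>2) \<le> ennreal (\<eta>^2) * indicator {-R-1..R+1} y" for y
    proof (cases "y \<in> {-R-1..R+1}")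
      case True
      then have "dist (g (y+u)) (g y) < \<eta>"
        using u by (intro d0') (auto simp: dist_real_def)
      then have "(cmod (g (y + u) - g y))\<^sup>2 \<le> \<eta>^2"
        by (intro power_mono) (auto simp: dist_norm)
      then show ?thesis using True by simp
    next
      case False
      then have "R < \<bar>y\<bar>" "R < \<bar>y+u\<bar>" using u by auto
      then show ?thesis using supp by simp
    qed
    have "NN (\<lambda>y. g (y + u) - g y) \<le> (\<integral>\<^sup>+y. ennreal (\<eta>^2) * indicator {-R-1..R+1} y \<partial>lborel)"
      unfolding NN_def by (intro nn_integral_mono pt)
    also have "\<dots> = ennreal (\<eta>^2) * ennreal (2*R+2)"
      using R by (simp add: nn_integral_cmult)
    also have "\<dots> = ennreal (\<eta>^2 * (2*R+2))" by (rule ennreal_mult[symmetric]) (use R in auto)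
    also have "\<dots> = ennreal e" using \<eta>2 by simp
    finally show "NN (\<lambda>y. g (y + u) - g y) \<le> ennreal e" .
  qed
qed

definition clip :: "real \<Rightarrow> complex \<Rightarrow> complex" where
  "clip M z = z / complex_of_real (max 1 (cmod z / M))"

definition bump :: "real \<Rightarrow> real \<Rightarrow> real" where
  "bump M x = max 0 (min 1 (M + 1 - \<bar>x\<bar>))"

lemma clip_cont: "M > 0 \<Longrightarrow> continuous_on UNIV (clip M)"
  unfolding clip_def by (intro continuous_intros) auto

lemma bump_cont: "continuous_on UNIV (bump M)"
  unfolding bump_def by (intro continuous_intros)

lemma clip_norm: "M > 0 \<Longrightarrow> cmod (clip M z) \<le> M"
  unfolding clip_def norm_divide
  by (auto simp: max_def field_simps)

lemma clip_id: "M > 0 \<Longrightarrow> cmod z \<le> M \<Longrightarrow> clip M z = z"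
  unfolding clip_def by (auto simp: max_def field_simps)

lemma bump_01: "0 \<le> bump M x" "bump M x \<le> 1"
  unfolding bump_def by auto

lemma bump_one: "\<bar>x\<bar> \<le> M \<Longrightarrow> bump M x = 1"
  unfolding bump_def by auto

lemma bump_zero: "M + 1 \<le> \<bar>x\<bar> \<Longrightarrow> bump M x = 0"
  unfolding bump_def by auto

lemma clip_bump_le: "M > 0 \<Longrightarrow> cmod (z - clip M z * bump M x) \<le> cmod z"
proof -
  assume M: "M > 0"
  define c where "c = bump M x / max 1 (cmod z / M)"
  have c: "0 \<le> c" "c \<le> 1" unfolding c_def using bump_01[of M x]
    by (auto simp: max_def field_simps)
  have "z - clip M z * bump M x = z * complex_of_real (1 - c)"
    unfolding clip_def c_def by (simp add: field_simps)
  moreover have "cmod (z * complex_of_real (1-c)) = cmod z * (1-c)"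
    using c by (simp add: norm_mult del: of_real_diff)
  moreover have "cmod z * (1-c) \<le> cmod z" using c by (simp add: mult_left_le)
  ultimately show ?thesis by simp
qed

lemma NN_dominated0:
  fixes s :: "nat \<Rightarrow> real \<Rightarrow> complex" and w :: "real \<Rightarrow> real"
  assumes [measurable]: "\<And>n. s n \<in> borel_measurable borel" and w[measurable]: "w \<in> borel_measurable borel"
    and wf: "(\<integral>\<^sup>+x. ennreal (w x) \<partial>lborel) < \<infinity>"
    and bd: "\<And>n. AE x in lborel. (cmod (s n x))\<^sup>2 \<le> w x"
    and lim: "AE x in lborel. (\<lambda>n. s n x) \<longlonglongrightarrow> 0"
    and e: "e > 0"
  shows "\<exists>n. NN (s n) < ennreal e"
proof -
  have "(\<lambda>n. \<integral>\<^sup>+x. ennreal ((cmod (s n x))\<^sup>2) \<partial>lborel) \<longlonglongrightarrow> (\<integral>\<^sup>+x. 0 \<partial>(lborel::real measure))"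
  proof (rule nn_integral_dominated_convergence[of "\<lambda>n x. ennreal ((cmod (s n x))\<^sup>2)" lborel "\<lambda>x. 0" "\<lambda>x. ennreal (w x)"])
    show "AE x in lborel. ennreal ((cmod (s j x))\<^sup>2) \<le> ennreal (w x)" for j
      using bd[of j] by eventually_elim (rule ennreal_leI)
    show "AE x in lborel. (\<lambda>i. ennreal ((cmod (s i x))\<^sup>2)) \<longlonglongrightarrow> 0"
      using lim
    proof eventually_elim
      case (elim x)
      have "(\<lambda>i. ennreal ((cmod (s i x))\<^sup>2)) \<longlonglongrightarrow> ennreal ((cmod (0::complex))\<^sup>2)"
        by (intro tendsto_ennrealI tendsto_intros elim)
      then show ?case by simp
    qed
  qed (use wf in auto)
  then have "(\<lambda>n. NN (s n)) \<longlonglongrightarrow> 0" by (simp add: NN_def)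
  then have "eventually (\<lambda>n. NN (s n) < ennreal e) sequentially"
    using e by (intro order_tendstoD) auto
  then obtain N where "\<And>n. n \<ge> N \<Longrightarrow> NN (s n) < ennreal e" unfolding eventually_sequentially by blast
  then show ?thesis by blast
qed

lemma density_L2:
  assumes h: "L2 h" and e: "e > 0"
  shows "\<exists>g R. continuous_on UNIV g \<and> R \<ge> 0 \<and> (\<forall>x. R < \<bar>x\<bar> \<longrightarrow> g x = 0) \<and> NN (\<lambda>x. h x - g x) < ennreal e"
proof -
  have hm[measurable]: "h \<in> borel_measurable borel" using h by (simp add: L2_iff)
  have hf: "(\<integral>\<^sup>+x. ennreal ((cmod (h x))\<^sup>2) \<partial>lborel) < \<infinity>" using h by (simp add: L2_iff NN_def)
  have e8: "e/8 > 0" using e by simp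
  define k where "k = (\<lambda>n x. clip (real n + 1) (h x) * bump (real n + 1) x)"
  have km[measurable]: "k n \<in> borel_measurable borel" for n
    unfolding k_def using borel_measurable_continuous_onI[OF clip_cont[of "real n + 1"]]
      borel_measurable_continuous_onI[OF bump_cont[of "real n + 1"]] by measurable
  obtain M where M: "NN (\<lambda>x. h x - k M x) < ennreal (e/8)"
  proof -
    have "\<exists>n. NN ((\<lambda>n x. h x - k n x) n) < ennreal (e/8)"
    proof (rule NN_dominated0[where w="\<lambda>x. (cmod (h x))\<^sup>2"])
      show "AE x in lborel. (cmod (h x - k n x))\<^sup>2 \<le> (cmod (h x))\<^sup>2" for n
        unfolding k_def by (intro AE_I2 power_mono clip_bump_le) auto
      show "AE x in lborel. (\<lambda>n. h x - k n x) \<longlonglongrightarrow> 0"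
      proof (intro AE_I2 tendsto_eventually)
        fix x
        obtain N :: nat where N: "max (cmod (h x)) \<bar>x\<bar> \<le> real N" using real_arch_simple by blast
        show "\<forall>\<^sub>F n in sequentially. h x - k n x = 0"
          unfolding eventually_sequentially
          using N by (intro exI[of _ N] allI impI) (auto simp: k_def clip_id bump_one)
      qed
    qed (use hf e8 in auto)
    then show ?thesis using that by blast
  qed
  define Mr where "Mr = real M + 1"
  have Mr: "Mr > 0" by (simp add: Mr_def)
  have "h \<in> borel_measurable lebesgue" by (rule measurable_completion) simp
  then have "h measurable_on UNIV" by (rule lebesgue_measurable_imp_measurable_on) simp
  then obtain N g where N: "negligible N" and gc: "\<And>n. continuous_on UNIV (g n)"
    and gl: "\<And>x. x \<notin> N \<Longrightarrow> (\<lambda>n. g n x) \<longlonglongrightarrow> h x"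
    unfolding measurable_on_def by auto
  have gm[measurable]: "g n \<in> borel_measurable borel" for n using gc by (rule borel_measurable_continuous_onI)
  define q where "q = (\<lambda>n x. clip Mr (g n x) * bump Mr x)"
  have qm[measurable]: "q n \<in> borel_measurable borel" for n
    unfolding q_def using borel_measurable_continuous_onI[OF clip_cont[OF Mr]]
      borel_measurable_continuous_onI[OF bump_cont[of Mr]] by measurable
  have AEN: "AE x in lborel. x \<notin> N"
  proof -
    have "AE x in lebesgue. x \<notin> N"
      using N unfolding negligible_iff_null_sets by (rule AE_not_in)
    then show ?thesis by (simp add: AE_completion_iff)
  qed
  obtain n where n: "NN ((\<lambda>n x. k M x - q n x) n) < ennreal (e/8)"
  proof -
    have "\<exists>n. NN ((\<lambda>n x. k M x - q n x) n) < ennreal (e/8)"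
    proof (rule NN_dominated0[where w="\<lambda>x. (2*Mr)^2 * indicator {-Mr-1..Mr+1} x"])
      show "AE x in lborel. (cmod (k M x - q n x))\<^sup>2 \<le> (2*Mr)^2 * indicator {-Mr-1..Mr+1} x" for n
      proof (intro AE_I2)
        fix x
        show "(cmod (k M x - q n x))\<^sup>2 \<le> (2*Mr)^2 * indicator {-Mr-1..Mr+1} x"
        proof (cases "x \<in> {-Mr-1..Mr+1}")
          case True
          have "cmod (k M x - q n x) \<le> cmod (k M x) + cmod (q n x)" by (rule norm_triangle_ineq4)
          also have "\<dots> \<le> Mr + Mr" unfolding k_def q_def Mr_def[symmetric] norm_mult
            using clip_norm[OF Mr] bump_01[of Mr x]
            by (intro add_mono) (auto intro!: mult_le_one[where a="cmod _"] simp: mult_le_cancel_left1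
                  intro: order.trans[OF mult_right_le_one_le])
          finally have "cmod (k M x - q n x) \<le> 2 * Mr" by simp
          then have "(cmod (k M x - q n x))\<^sup>2 \<le> (2*Mr)^2" by (intro power_mono) auto
          then show ?thesis using True by simp
        next
          case False
          then have "bump Mr x = 0" by (intro bump_zero) auto
          then show ?thesis using False by (simp add: k_def q_def Mr_def[symmetric])
        qed
      qed
      show "AE x in lborel. (\<lambda>n. k M x - q n x) \<longlonglongrightarrow> 0"
        using AEN
      proof eventually_elim
        case (elim x)
        have "isCont (clip Mr) (h x)"
          using clip_cont[OF Mr] by (simp add: continuous_on_eq_continuous_at)
        then have "(\<lambda>n. clip Mr (g n x)) \<longlonglongrightarrow> clip Mr (h x)"
          using gl[OF elim] by (rule isCont_tendsto_compose)
        then have "(\<lambda>n. k M x - q n x) \<longlonglongrightarrow> k M x - clip Mr (h x) * bump Mr x"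
          unfolding q_def by (intro tendsto_intros)
        then show ?case by (simp add: k_def Mr_def)
      qed
      show "(\<integral>\<^sup>+x. ennreal ((2*Mr)^2 * indicator {-Mr-1..Mr+1} x) \<partial>lborel) < \<infinity>"
        using Mr by (simp add: ennreal_mult' nn_integral_cmult ennreal_indicator ennreal_mult_less_top)
    qed (use e8 in auto)
    then show ?thesis using that by blast
  qed
  show ?thesis
  proof (intro exI conjI allI impI)
    show "continuous_on UNIV (q n)" unfolding q_def
      by (intro continuous_on_mult continuous_on_compose2[OF clip_cont[OF Mr] gc] 
          continuous_on_of_real continuous_on_compose2[OF continuous_on_of_real bump_cont]) auto
    show "0 \<le> Mr + 1" using Mr by simp
    show "q n x = 0" if "Mr + 1 < \<bar>x\<bar>" for x using that by (simp add: q_def bump_zero)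
    have "NN (\<lambda>x. h x - q n x) = NN (\<lambda>x. (h x - k M x) - (- (k M x - q n x)))"
      by (simp add: algebra_simps)
    also have "\<dots> \<le> 2 * NN (\<lambda>x. h x - k M x) + 2 * NN (\<lambda>x. - (k M x - q n x))"
      by (rule NN_diff_le) auto
    also have "NN (\<lambda>x. - (k M x - q n x)) = NN (\<lambda>x. k M x - q n x)"
      by (simp add: NN_def norm_minus_commute)
    also have "2 * NN (\<lambda>x. h x - k M x) + 2 * NN (\<lambda>x. k M x - q n x) \<le> 2 * ennreal (e/8) + 2 * ennreal (e/8)"
      using M n by (intro add_mono mult_left_mono) auto
    also have "\<dots> = ennreal (2*(e/8)) + ennreal (2*(e/8))" using e by (simp only: ennreal_mult) simp
    also have "\<dots> = ennreal (e/2)" using e by (subst ennreal_plus[symmetric]) auto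
    also have "\<dots> < ennreal e" using e by (simp add: ennreal_lessI)
    finally show "NN (\<lambda>x. h x - q n x) < ennreal e" .
  qed
qed

lemma shift_cont:
  assumes h: "L2 h" and e: "e > 0"
  shows "\<exists>d>0. \<forall>u. \<bar>u\<bar> < d \<longrightarrow> NN (\<lambda>y. h (y + u) - h y) \<le> ennreal e"
proof -
  have hm[measurable]: "h \<in> borel_measurable borel" using h by (simp add: L2_iff)
  obtain g R where gc: "continuous_on UNIV g" and R: "R \<ge> 0" and gs: "\<And>x. R < \<bar>x\<bar> \<Longrightarrow> g x = 0"
    and hg: "NN (\<lambda>x. h x - g x) < ennreal (e/9)"
    using density_L2[OF h, of "e/9"] e by auto
  have gm[measurable]: "g \<in> borel_measurable borel" using gc by (rule borel_measurable_continuous_onI)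
  obtain d where d: "d > 0" and dg: "\<And>u. \<bar>u\<bar> < d \<Longrightarrow> NN (\<lambda>y. g (y + u) - g y) \<le> ennreal (e/9)"
    using cont_support_shift[OF gc R gs, of "e/9"] e by auto
  show ?thesis
  proof (intro exI conjI allI impI)
    show "d > 0" by fact
    fix u :: real assume u: "\<bar>u\<bar> < d"
    have "NN (\<lambda>y. h (y + u) - h y) = NN (\<lambda>y. (h (y + u) - g (y + u)) + (g (y + u) - g y) + (g y - h y))"
      by (simp add: algebra_simps)
    also have "\<dots> \<le> 3 * NN (\<lambda>y. h (y + u) - g (y + u)) + 3 * NN (\<lambda>y. g (y + u) - g y) + 3 * NN (\<lambda>y. g y - h y)"
      by (rule NN_diff3_le) auto
    also have "NN (\<lambda>y. h (y + u) - g (y + u)) = NN (\<lambda>x. h x - g x)"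
      by (rule NN_shift[of "\<lambda>x. h x - g x"]) auto
    also have "NN (\<lambda>y. g y - h y) = NN (\<lambda>x. h x - g x)"
      by (simp add: NN_def norm_minus_commute)
    also have "3 * NN (\<lambda>x. h x - g x) + 3 * NN (\<lambda>y. g (y + u) - g y) + 3 * NN (\<lambda>x. h x - g x)
        \<le> 3 * ennreal (e/9) + 3 * ennreal (e/9) + 3 * ennreal (e/9)"
      using hg dg[OF u] by (intro add_mono mult_left_mono) auto
    also have "\<dots> = ennreal (3*(e/9)) + ennreal (3*(e/9)) + ennreal (3*(e/9))"
      using e by (simp only: ennreal_mult) simp
    also have "\<dots> = ennreal e" using e by (simp add: ennreal_plus[symmetric] del: ennreal_plus)
    finally show "NN (\<lambda>y. h (y + u) - h y) \<le> ennreal e" .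
  qed
qed

lemma cnj_meas[measurable]: "cnj \<in> borel_measurable borel"
  by (intro borel_measurable_continuous_onI continuous_intros)

lemma inner_L2:
  assumes [measurable]: "f \<in> borel_measurable borel" "g \<in> borel_measurable borel"
    and ff: "NN f < \<infinity>" and gf: "NN g < \<infinity>"
  shows "integrable lborel (\<lambda>y. f y * cnj (g y))"
    and "cmod (\<integral>y. f y * cnj (g y) \<partial>lborel) \<le> sqrt (enn2real (NN f) * enn2real (NN g))"
proof -
  define X where "X = (\<integral>\<^sup>+x. ennreal (cmod (f x) * cmod (g x)) \<partial>lborel)"
  have X2: "X^2 \<le> NN f * NN g" unfolding X_def by (rule CS) auto
  have "NN f * NN g < \<infinity>" using ff gf by (simp add: ennreal_mult_less_top)
  then have "X^2 < \<infinity>" using X2 by (rule le_less_trans[rotated])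
  then have Xf: "X < \<infinity>" by (simp add: power_less_top_ennreal)
  show int: "integrable lborel (\<lambda>y. f y * cnj (g y))"
    unfolding integrable_iff_bounded using Xf by (simp add: X_def norm_mult)
  have "cmod (\<integral>y. f y * cnj (g y) \<partial>lborel) \<le> (\<integral>y. cmod (f y * cnj (g y)) \<partial>lborel)"
    by (rule integral_norm_bound)
  also have "\<dots> = enn2real X"
    unfolding X_def by (subst integral_eq_nn_integral) (auto simp: norm_mult)
  also have "\<dots> \<le> sqrt (enn2real (NN f) * enn2real (NN g))"
  proof (rule real_le_rsqrt)
    have "(enn2real X)^2 = enn2real (X^2)" by (simp add: power2_eq_square enn2real_mult)
    also have "\<dots> \<le> enn2real (NN f * NN g)"
      using X2 \<open>NN f * NN g < \<infinity>\<close> by (intro enn2real_mono) auto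
    also have "\<dots> = enn2real (NN f) * enn2real (NN g)" by (simp add: enn2real_mult)
    finally show "(enn2real X)^2 \<le> enn2real (NN f) * enn2real (NN g)" .
  qed
  finally show "cmod (\<integral>y. f y * cnj (g y) \<partial>lborel) \<le> sqrt (enn2real (NN f) * enn2real (NN g))" .
qed

definition acorr :: "(real \<Rightarrow> complex) \<Rightarrow> real \<Rightarrow> complex" where
  "acorr h u = (\<integral>y. h (y + u) * cnj (h y) \<partial>lborel)"

lemma acorr_0:
  assumes [measurable]: "h \<in> borel_measurable borel"
  shows "acorr h 0 = complex_of_real (enn2real (NN h))"
proof -
  have "acorr h 0 = (\<integral>y. complex_of_real ((cmod (h y))\<^sup>2) \<partial>lborel)"
    unfolding acorr_def by (intro Bochner_Integration.integral_cong) (auto simp: complex_mult_cnj cmod_power2)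
  also have "\<dots> = complex_of_real (\<integral>y. (cmod (h y))\<^sup>2 \<partial>lborel)" by (rule integral_complex_of_real)
  also have "(\<integral>y. (cmod (h y))\<^sup>2 \<partial>lborel) = enn2real (NN h)"
    unfolding NN_def by (subst integral_eq_nn_integral) auto
  finally show ?thesis .
qed

lemma acorr_bound:
  assumes h: "L2 h"
  shows "integrable lborel (\<lambda>y. h (y + u) * cnj (h y))" "cmod (acorr h u) \<le> enn2real (NN h)"
proof -
  have hm[measurable]: "h \<in> borel_measurable borel" and hf: "NN h < \<infinity>" using h by (auto simp: L2_iff)
  have s: "NN (\<lambda>y. h (y + u)) = NN h" by (rule NN_shift) simp
  show "integrable lborel (\<lambda>y. h (y + u) * cnj (h y))"
    by (rule inner_L2(1)) (use hf s in auto)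
  have "cmod (acorr h u) \<le> sqrt (enn2real (NN (\<lambda>y. h (y + u))) * enn2real (NN h))"
    unfolding acorr_def by (rule inner_L2(2)) (use hf s in auto)
  also have "\<dots> = enn2real (NN h)" by (simp add: s)
  finally show "cmod (acorr h u) \<le> enn2real (NN h)" .
qed

lemma acorr_cont:
  assumes h: "L2 h"
  shows "isCont (acorr h) 0"
proof -
  have hm[measurable]: "h \<in> borel_measurable borel" and hf: "NN h < \<infinity>" using h by (auto simp: L2_iff)
  show ?thesis unfolding isCont_def LIM_def
  proof (intro allI impI)
    fix r :: real assume r: "r > 0"
    define c where "c = enn2real (NN h) + 1"
    have c: "c > 0" unfolding c_def using enn2real_nonneg[of "NN h"] by linarith
    obtain d where d: "d > 0" and dd: "\<And>u. \<bar>u\<bar> < d \<Longrightarrow> NN (\<lambda>y. h (y + u) - h y) \<le> ennreal (r^2 / (2*c))"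
      using shift_cont[OF h, of "r^2/(2*c)"] r c by auto
    show "\<exists>s>0. \<forall>u. u \<noteq> 0 \<and> dist u 0 < s \<longrightarrow> dist (acorr h u) (acorr h 0) < r"
    proof (intro exI conjI allI impI)
      show "d > 0" by fact
      fix u :: real assume u: "u \<noteq> 0 \<and> dist u 0 < d"
      then have du: "\<bar>u\<bar> < d" by simp
      have fin: "NN (\<lambda>y. h (y + u) - h y) < \<infinity>"
        using dd[OF du] by (simp add: le_less_trans)
      have "(\<integral>y. (h (y + u) - h y) * cnj (h y) \<partial>lborel) = (\<integral>y. h (y + u) * cnj (h y) - h (y + 0) * cnj (h y) \<partial>lborel)"
        by (simp only: left_diff_distrib add_0_right)
      also have "\<dots> = acorr h u - acorr h 0"
        unfolding acorr_def by (rule Bochner_Integration.integral_diff[OF acorr_bound(1)[OF h] acorr_bound(1)[OF h]])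
      finally have "acorr h u - acorr h 0 = (\<integral>y. (h (y + u) - h y) * cnj (h y) \<partial>lborel)" by simp
      then have "cmod (acorr h u - acorr h 0) \<le> sqrt (enn2real (NN (\<lambda>y. h (y + u) - h y)) * enn2real (NN h))"
        using inner_L2(2)[of "\<lambda>y. h (y + u) - h y" h] fin hf by simp
      also have "\<dots> \<le> sqrt ((r^2 / (2*c)) * c)"
      proof (intro real_sqrt_le_mono mult_mono)
        show "enn2real (NN (\<lambda>y. h (y + u) - h y)) \<le> r^2 / (2*c)"
          using dd[OF du] r c by (simp add: enn2real_leI)
        show "enn2real (NN h) \<le> c" by (simp add: c_def)
      qed (use r c in auto)
      also have "\<dots> = r / sqrt 2" using c r by (simp add: real_sqrt_divide)
      also have "\<dots> < r" using r by (simp add: divide_less_eq)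
      finally show "dist (acorr h u) (acorr h 0) < r" by (simp add: dist_norm)
    qed
  qed
qed

lemma nn_shift: "(f :: real \<Rightarrow> ennreal) \<in> borel_measurable borel \<Longrightarrow> (\<integral>\<^sup>+u. f (y + u) \<partial>lborel) = (\<integral>\<^sup>+u. f u \<partial>lborel)"
  using nn_integral_real_affine[of f 1 y] by simp

lemma prod_int:
  fixes h :: "real \<Rightarrow> complex" and k :: "real \<times> real \<Rightarrow> complex"
  assumes hi: "integrable lborel h" and [measurable]: "h \<in> borel_measurable borel"
    and km[measurable]: "k \<in> borel_measurable (lborel \<Otimes>\<^sub>M lborel)" and kb: "\<And>z. cmod (k z) \<le> 1"
  shows "integrable (lborel \<Otimes>\<^sub>M lborel) (\<lambda>(y,u). h (y + u) * cnj (h y) * k (y,u))"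
proof -
  define L where "L = (\<integral>\<^sup>+u. ennreal (cmod (h u)) \<partial>lborel)"
  have L: "L < \<infinity>" using hi unfolding L_def integrable_iff_bounded by simp
  have "(\<integral>\<^sup>+z. ennreal (norm ((\<lambda>(y,u). h (y + u) * cnj (h y) * k (y,u)) z)) \<partial>(lborel \<Otimes>\<^sub>M lborel))
      \<le> (\<integral>\<^sup>+z. ennreal (cmod (h (fst z + snd z)) * cmod (h (fst z))) \<partial>(lborel \<Otimes>\<^sub>M lborel))"
  proof (intro nn_integral_mono ennreal_leI)
    fix z :: "real \<times> real"
    obtain y u where z: "z = (y,u)" by (cases z)
    have "cmod (h (y + u) * cnj (h y) * k (y,u)) = cmod (h (y+u)) * cmod (h y) * cmod (k (y,u))"
      by (simp add: norm_mult)
    also have "\<dots> \<le> cmod (h (y+u)) * cmod (h y) * 1"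
      by (intro mult_left_mono kb) auto
    finally show "norm ((\<lambda>(y,u). h (y + u) * cnj (h y) * k (y,u)) z) \<le> cmod (h (fst z + snd z)) * cmod (h (fst z))"
      by (simp add: z)
  qed
  also have "\<dots> = (\<integral>\<^sup>+y. \<integral>\<^sup>+u. ennreal (cmod (h (y + u)) * cmod (h y)) \<partial>lborel \<partial>lborel)"
    by (subst lborel.nn_integral_fst[symmetric]) auto
  also have "\<dots> = (\<integral>\<^sup>+y. ennreal (cmod (h y)) * L \<partial>lborel)"
  proof (intro nn_integral_cong)
    fix y
    have "(\<integral>\<^sup>+u. ennreal (cmod (h (y + u)) * cmod (h y)) \<partial>lborel) = (\<integral>\<^sup>+u. ennreal (cmod (h (y + u))) * ennreal (cmod (h y)) \<partial>lborel)"
      by (simp add: ennreal_mult)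
    also have "\<dots> = (\<integral>\<^sup>+u. ennreal (cmod (h (y + u))) \<partial>lborel) * ennreal (cmod (h y))"
      by (rule nn_integral_multc) auto
    also have "(\<integral>\<^sup>+u. ennreal (cmod (h (y + u))) \<partial>lborel) = L"
      unfolding L_def by (rule nn_shift[of "\<lambda>u. ennreal (cmod (h u))"]) auto
    finally show "(\<integral>\<^sup>+u. ennreal (cmod (h (y + u)) * cmod (h y)) \<partial>lborel) = ennreal (cmod (h y)) * L"
      by (simp add: mult.commute)
  qed
  also have "\<dots> = L * L" unfolding L_def by (subst nn_integral_multc) auto
  also have "\<dots> < \<infinity>" using L by (simp add: ennreal_mult_less_top)
  finally show ?thesis unfolding integrable_iff_bounded by auto
qed

definition E :: "real \<Rightarrow> real \<Rightarrow> complex" where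
  "E \<xi> x = exp (- \<i> * complex_of_real (\<xi> * x))"

lemma E_meas[measurable]: "(\<lambda>x. E \<xi> x) \<in> borel_measurable borel"
  unfolding E_def by (intro borel_measurable_continuous_onI continuous_intros)

lemma E_meas2[measurable]: "(\<lambda>z. E (fst z) (snd z)) \<in> borel_measurable (lborel \<Otimes>\<^sub>M lborel)"
  unfolding E_def by measurable

lemma E_norm[simp]: "cmod (E \<xi> x) = 1"
proof -
  have "- \<i> * complex_of_real (\<xi> * x) = \<i> * complex_of_real (- (\<xi> * x))" by simp
  then show ?thesis unfolding E_def by (simp only: norm_exp_i_times)
qed

lemma E_shift: "E \<xi> (y + u) * cnj (E \<xi> y) = E \<xi> u"
  unfolding E_def exp_cnj exp_add[symmetric] by (simp add: algebra_simps)

lemma fourier_E: "fourier_L1 h \<xi> = complex_of_real (1 / sqrt (2 * pi)) * (\<integral>x. h x * E \<xi> x \<partial>lborel)"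
  unfolding fourier_L1_def E_def ..

lemma D1:
  assumes hi: "integrable lborel h" and hm[measurable]: "h \<in> borel_measurable borel"
  shows "fourier_L1 h \<xi> * cnj (fourier_L1 h \<xi>) = complex_of_real (1/(2*pi)) * (\<integral>u. acorr h u * E \<xi> u \<partial>lborel)"
proof -
  define I where "I = (\<integral>x. h x * E \<xi> x \<partial>lborel)"
  have cI: "cnj I = (\<integral>y. cnj (h y) * cnj (E \<xi> y) \<partial>lborel)"
  proof -
    have "cnj I = (\<integral>y. cnj (h y * E \<xi> y) \<partial>lborel)" unfolding I_def by (rule Bochner_Integration.integral_cnj[symmetric])
    also have "\<dots> = (\<integral>y. cnj (h y) * cnj (E \<xi> y) \<partial>lborel)" by (simp only: complex_cnj_mult)
    finally show ?thesis .
  qed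
  have "I * cnj I = (\<integral>y. cnj (h y) * cnj (E \<xi> y) \<partial>lborel) * I" by (simp only: cI mult.commute)
  also have "\<dots> = (\<integral>y. cnj (h y) * cnj (E \<xi> y) * I \<partial>lborel)"
    by simp
  also have "\<dots> = (\<integral>y. (\<integral>x. cnj (h y) * cnj (E \<xi> y) * (h x * E \<xi> x) \<partial>lborel) \<partial>lborel)"
    unfolding I_def by simp
  also have "\<dots> = (\<integral>y. (\<integral>u. h (y + u) * cnj (h y) * E \<xi> u \<partial>lborel) \<partial>lborel)"
  proof (rule Bochner_Integration.integral_cong[OF refl])
    fix y :: real assume "y \<in> space lborel"
    have "(\<integral>x. cnj (h y) * cnj (E \<xi> y) * (h x * E \<xi> x) \<partial>lborel) =
        (\<integral>u. cnj (h y) * cnj (E \<xi> y) * (h (y + 1 * u) * E \<xi> (y + 1 * u)) \<partial>lborel)"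
      using lborel_integral_real_affine[of 1 "\<lambda>x. cnj (h y) * cnj (E \<xi> y) * (h x * E \<xi> x)" y] by simp
    also have "\<dots> = (\<integral>u. h (y + u) * cnj (h y) * E \<xi> u \<partial>lborel)"
    proof (rule Bochner_Integration.integral_cong[OF refl])
      fix u :: real assume "u \<in> space lborel"
      have "cnj (h y) * cnj (E \<xi> y) * (h (y + 1 * u) * E \<xi> (y + 1 * u)) = h (y + u) * cnj (h y) * (E \<xi> (y + u) * cnj (E \<xi> y))"
        by (simp add: ac_simps)
      then show "cnj (h y) * cnj (E \<xi> y) * (h (y + 1 * u) * E \<xi> (y + 1 * u)) = h (y + u) * cnj (h y) * E \<xi> u"
        by (simp only: E_shift)
    qed
    finally show "(\<integral>x. cnj (h y) * cnj (E \<xi> y) * (h x * E \<xi> x) \<partial>lborel) = (\<integral>u. h (y + u) * cnj (h y) * E \<xi> u \<partial>lborel)" .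
  qed
  also have "\<dots> = (\<integral>u. (\<integral>y. h (y + u) * cnj (h y) * E \<xi> u \<partial>lborel) \<partial>lborel)"
  proof (rule lborel_pair.Fubini_integral[symmetric])
    show "integrable (lborel \<Otimes>\<^sub>M lborel) (\<lambda>(y, u). h (y + u) * cnj (h y) * E \<xi> u)"
      using prod_int[OF hi hm, of "\<lambda>(y,u). E \<xi> u"] by (simp add: split_beta')
  qed
  also have "\<dots> = (\<integral>u. acorr h u * E \<xi> u \<partial>lborel)"
    unfolding acorr_def by simp
  finally have II: "I * cnj I = (\<integral>u. acorr h u * E \<xi> u \<partial>lborel)" .
  have "fourier_L1 h \<xi> * cnj (fourier_L1 h \<xi>) = complex_of_real (1 / sqrt (2 * pi) * (1 / sqrt (2 * pi))) * (I * cnj I)"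
    unfolding fourier_E I_def[symmetric] by (simp only: complex_cnj_mult complex_cnj_complex_of_real of_real_mult ac_simps)
  also have "1 / sqrt (2 * pi) * (1 / sqrt (2 * pi)) = 1 / (2*pi)"
    using pi_gt_zero by (simp add: field_simps)
  finally show ?thesis using II by simp
qed

lemma gauss_ft:
  assumes \<sigma>: "\<sigma> > 0"
  shows "(\<integral>\<xi>. complex_of_real (exp (-(\<sigma>*\<xi>)\<^sup>2/2)) * E \<xi> u \<partial>lborel) = complex_of_real (sqrt (2*pi) / \<sigma> * exp (-(u/\<sigma>)\<^sup>2/2))"
proof -
  define F where "F = (\<lambda>x. std_normal_density x *\<^sub>R iexp ((-u/\<sigma>) * x))"
  have 1: "(\<integral>x. F x \<partial>lborel) = complex_of_real (exp (-((-u/\<sigma>)\<^sup>2)/2))"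
  proof -
    have "char std_normal_distribution (-u/\<sigma>) = complex_of_real (exp (-((-u/\<sigma>)\<^sup>2)/2))"
      by (simp add: char_std_normal_distribution)
    moreover have "char std_normal_distribution (-u/\<sigma>) = (\<integral>x. F x \<partial>lborel)"
      unfolding char_def F_def
      by (subst integral_density) (auto simp: normal_density_nonneg)
    ultimately show ?thesis by simp
  qed
  have 2: "(\<integral>x. F x \<partial>lborel) = \<bar>\<sigma>\<bar> *\<^sub>R (\<integral>\<xi>. F (0 + \<sigma> * \<xi>) \<partial>lborel)"
    using \<sigma> by (intro lborel_integral_real_affine) simp
  have 3: "F (\<sigma> * \<xi>) = complex_of_real (1 / sqrt (2*pi)) * (complex_of_real (exp (-(\<sigma>*\<xi>)\<^sup>2/2)) * E \<xi> u)" for \<xi>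
  proof -
    have "\<i> * complex_of_real (-u/\<sigma> * (\<sigma> * \<xi>)) = - \<i> * complex_of_real (\<xi> * u)"
      using \<sigma> by (simp add: field_simps)
    then show ?thesis
      unfolding F_def E_def std_normal_density_def scaleR_conv_of_real by (simp add: ac_simps)
  qed
  have "(\<integral>\<xi>. complex_of_real (exp (-(\<sigma>*\<xi>)\<^sup>2/2)) * E \<xi> u \<partial>lborel)
      = (\<integral>\<xi>. complex_of_real (sqrt (2*pi)) * F (0 + \<sigma> * \<xi>) \<partial>lborel)"
  proof (intro Bochner_Integration.integral_cong refl)
    fix \<xi>
    have "complex_of_real (sqrt (2*pi)) * F (0 + \<sigma> * \<xi>) = complex_of_real (sqrt (2*pi) * (1 / sqrt (2*pi))) * (complex_of_real (exp (-(\<sigma>*\<xi>)\<^sup>2/2)) * E \<xi> u)"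
      unfolding 3 add_0_left of_real_mult by (simp only: mult.assoc)
    also have "sqrt (2*pi) * (1 / sqrt (2*pi)) = 1" by simp
    finally show "complex_of_real (exp (-(\<sigma>*\<xi>)\<^sup>2/2)) * E \<xi> u = complex_of_real (sqrt (2*pi)) * F (0 + \<sigma> * \<xi>)"
      by simp
  qed
  also have "\<dots> = complex_of_real (sqrt (2*pi)) * (\<integral>\<xi>. F (0 + \<sigma> * \<xi>) \<partial>lborel)" by simp
  also have "(\<integral>\<xi>. F (0 + \<sigma> * \<xi>) \<partial>lborel) = complex_of_real (1/\<sigma>) * (\<integral>x. F x \<partial>lborel)"
    using 2 \<sigma> by (simp add: scaleR_conv_of_real)
  also have "complex_of_real (sqrt (2*pi)) * (complex_of_real (1/\<sigma>) * (\<integral>x. F x \<partial>lborel))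
      = complex_of_real (sqrt (2*pi) / \<sigma> * exp (-(u/\<sigma>)\<^sup>2/2))"
    unfolding 1 by (simp add: power2_eq_square)
  finally show ?thesis .
qed

lemma acorr_int:
  assumes hi: "integrable lborel h" and hm[measurable]: "h \<in> borel_measurable borel"
  shows "integrable lborel (acorr h)"
proof -
  have "integrable (lborel \<Otimes>\<^sub>M lborel) (\<lambda>(y,u). h (y + u) * cnj (h y) * (\<lambda>_. 1) (y,u))"
    by (rule prod_int[OF hi hm]) auto
  then have "integrable (lborel \<Otimes>\<^sub>M lborel) (\<lambda>(u,y). (\<lambda>(y,u). h (y + u) * cnj (h y) * (\<lambda>_. 1) (y,u)) (y,u))"
    by (rule lborel_pair.integrable_product_swap)
  then have "integrable lborel (\<lambda>u. \<integral>y. (\<lambda>(u,y). (\<lambda>(y,u). h (y + u) * cnj (h y) * (\<lambda>_. 1) (y,u)) (y,u)) (u,y) \<partial>lborel)"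
    by (rule lborel_pair.integrable_fst')
  then show ?thesis unfolding acorr_def by simp
qed

lemma prod_int2:
  fixes a :: "real \<Rightarrow> real" and b :: "real \<Rightarrow> complex" and k :: "real \<times> real \<Rightarrow> complex"
  assumes ai: "integrable lborel a" and bi: "integrable lborel b"
    and km[measurable]: "k \<in> borel_measurable (lborel \<Otimes>\<^sub>M lborel)" and kb: "\<And>z. cmod (k z) \<le> 1"
  shows "integrable (lborel \<Otimes>\<^sub>M lborel) (\<lambda>(x,y). complex_of_real (a x) * (b y * k (x,y)))"
proof -
  have [measurable]: "a \<in> borel_measurable borel" "b \<in> borel_measurable borel"
    using ai bi by (auto dest: borel_measurable_integrable)
  define La where "La = (\<integral>\<^sup>+x. ennreal (norm (a x)) \<partial>lborel)"
  define Lb where "Lb = (\<integral>\<^sup>+x. ennreal (norm (b x)) \<partial>lborel)"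
  have La: "La < \<infinity>" using ai unfolding La_def integrable_iff_bounded by simp
  have Lb: "Lb < \<infinity>" using bi unfolding Lb_def integrable_iff_bounded by simp
  have "(\<integral>\<^sup>+z. ennreal (norm ((\<lambda>(x,y). complex_of_real (a x) * (b y * k (x,y))) z)) \<partial>(lborel \<Otimes>\<^sub>M lborel))
      \<le> (\<integral>\<^sup>+z. ennreal (norm (a (fst z)) * norm (b (snd z))) \<partial>(lborel \<Otimes>\<^sub>M lborel))"
  proof (intro nn_integral_mono ennreal_leI)
    fix z :: "real \<times> real"
    obtain x y where z: "z = (x,y)" by (cases z)
    have "norm (complex_of_real (a x) * (b y * k (x,y))) = norm (a x) * (norm (b y) * cmod (k (x,y)))"
      by (simp add: norm_mult)
    also have "\<dots> \<le> norm (a x) * (norm (b y) * 1)"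
      by (intro mult_left_mono kb) auto
    finally show "norm ((\<lambda>(x,y). complex_of_real (a x) * (b y * k (x,y))) z) \<le> norm (a (fst z)) * norm (b (snd z))"
      by (simp add: z)
  qed
  also have "\<dots> = (\<integral>\<^sup>+x. \<integral>\<^sup>+y. ennreal (norm (a x) * norm (b y)) \<partial>lborel \<partial>lborel)"
    by (subst lborel.nn_integral_fst[symmetric]) auto
  also have "\<dots> = (\<integral>\<^sup>+x. ennreal (norm (a x)) * Lb \<partial>lborel)"
    unfolding Lb_def by (intro nn_integral_cong) (simp add: ennreal_mult nn_integral_cmult)
  also have "\<dots> = La * Lb" unfolding La_def by (subst nn_integral_multc) auto
  also have "\<dots> < \<infinity>" using La Lb by (simp add: ennreal_mult_less_top)
  finally show ?thesis unfolding integrable_iff_bounded by auto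
qed

lemma gauss_int: "(\<sigma>::real) > 0 \<Longrightarrow> integrable lborel (\<lambda>\<xi>. exp (-(\<sigma>*\<xi>)\<^sup>2/2))"
proof -
  assume \<sigma>: "\<sigma> > 0"
  have "integrable lborel (\<lambda>\<xi>. std_normal_density (0 + \<sigma> * \<xi>))"
    using \<sigma> by (intro lborel_integrable_real_affine) auto
  then have X: "integrable lborel (\<lambda>\<xi>. sqrt (2*pi) * std_normal_density (0 + \<sigma> * \<xi>))" by simp
  have "(\<lambda>\<xi>. exp (-(\<sigma>*\<xi>)\<^sup>2/2)) = (\<lambda>\<xi>. sqrt (2*pi) * std_normal_density (0 + \<sigma> * \<xi>))"
    by (rule ext) (simp add: std_normal_density_def)
  then show ?thesis using X by (simp only:)
qed

lemma D2:
  assumes hi: "integrable lborel h" and hm[measurable]: "h \<in> borel_measurable borel" and \<sigma>: "\<sigma> > 0"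
  shows "(\<integral>\<xi>. complex_of_real (exp (-(\<sigma>*\<xi>)\<^sup>2/2)) * (fourier_L1 h \<xi> * cnj (fourier_L1 h \<xi>)) \<partial>lborel)
     = (\<integral>s. acorr h (\<sigma> * s) * complex_of_real (std_normal_density s) \<partial>lborel)"
proof -
  have Ai: "integrable lborel (acorr h)" by (rule acorr_int[OF hi hm])
  have [measurable]: "acorr h \<in> borel_measurable borel" using Ai by (auto dest: borel_measurable_integrable)
  define g where "g = (\<lambda>\<xi>. exp (-(\<sigma>*\<xi>)\<^sup>2/2))"
  have gi: "integrable lborel g" unfolding g_def using \<sigma> by (rule gauss_int)
  have "(\<integral>\<xi>. complex_of_real (g \<xi>) * (fourier_L1 h \<xi> * cnj (fourier_L1 h \<xi>)) \<partial>lborel)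
      = (\<integral>\<xi>. complex_of_real (1/(2*pi)) * (\<integral>u. complex_of_real (g \<xi>) * (acorr h u * E \<xi> u) \<partial>lborel) \<partial>lborel)"
  proof (rule Bochner_Integration.integral_cong[OF refl])
    fix \<xi> :: real assume "\<xi> \<in> space lborel"
    have "complex_of_real (g \<xi>) * (fourier_L1 h \<xi> * cnj (fourier_L1 h \<xi>)) = complex_of_real (1/(2*pi)) * (complex_of_real (g \<xi>) * (\<integral>u. acorr h u * E \<xi> u \<partial>lborel))"
      unfolding D1[OF hi hm] by (simp only: ac_simps)
    also have "complex_of_real (g \<xi>) * (\<integral>u. acorr h u * E \<xi> u \<partial>lborel) = (\<integral>u. complex_of_real (g \<xi>) * (acorr h u * E \<xi> u) \<partial>lborel)"
      by (rule integral_mult_right_zero[symmetric])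
    finally show "complex_of_real (g \<xi>) * (fourier_L1 h \<xi> * cnj (fourier_L1 h \<xi>)) = complex_of_real (1/(2*pi)) * (\<integral>u. complex_of_real (g \<xi>) * (acorr h u * E \<xi> u) \<partial>lborel)" .
  qed
  also have "\<dots> = complex_of_real (1/(2*pi)) * (\<integral>\<xi>. (\<integral>u. complex_of_real (g \<xi>) * (acorr h u * E \<xi> u) \<partial>lborel) \<partial>lborel)"
    by simp
  also have "(\<integral>\<xi>. (\<integral>u. complex_of_real (g \<xi>) * (acorr h u * E \<xi> u) \<partial>lborel) \<partial>lborel)
      = (\<integral>u. (\<integral>\<xi>. complex_of_real (g \<xi>) * (acorr h u * E \<xi> u) \<partial>lborel) \<partial>lborel)"
  proof (rule lborel_pair.Fubini_integral[symmetric])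
    show "integrable (lborel \<Otimes>\<^sub>M lborel) (\<lambda>(\<xi>, u). complex_of_real (g \<xi>) * (acorr h u * E \<xi> u))"
      using prod_int2[OF gi Ai, of "\<lambda>(\<xi>,u). E \<xi> u"] by (simp add: split_beta' g_def)
  qed
  also have "\<dots> = (\<integral>u. acorr h u * complex_of_real (sqrt (2*pi) / \<sigma> * exp (-(u/\<sigma>)\<^sup>2/2)) \<partial>lborel)"
  proof (rule Bochner_Integration.integral_cong[OF refl])
    fix u :: real assume "u \<in> space lborel"
    have "(\<lambda>\<xi>. complex_of_real (g \<xi>) * (acorr h u * E \<xi> u)) = (\<lambda>\<xi>. acorr h u * (complex_of_real (g \<xi>) * E \<xi> u))"
      by (rule ext) (rule mult.left_commute)
    then have "(\<integral>\<xi>. complex_of_real (g \<xi>) * (acorr h u * E \<xi> u) \<partial>lborel) = acorr h u * (\<integral>\<xi>. complex_of_real (g \<xi>) * E \<xi> u \<partial>lborel)"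
      by (simp only: integral_mult_right_zero)
    also have "\<dots> = acorr h u * complex_of_real (sqrt (2*pi) / \<sigma> * exp (-(u/\<sigma>)\<^sup>2/2))"
      unfolding g_def using gauss_ft[OF \<sigma>, of u] by simp
    finally show "(\<integral>\<xi>. complex_of_real (g \<xi>) * (acorr h u * E \<xi> u) \<partial>lborel) = acorr h u * complex_of_real (sqrt (2*pi) / \<sigma> * exp (-(u/\<sigma>)\<^sup>2/2))" .
  qed
  also have "\<dots> = \<bar>\<sigma>\<bar> *\<^sub>R (\<integral>s. acorr h (0 + \<sigma> * s) * complex_of_real (sqrt (2*pi) / \<sigma> * exp (-((0 + \<sigma> * s)/\<sigma>)\<^sup>2/2)) \<partial>lborel)"
    using \<sigma> by (intro lborel_integral_real_affine) simp
  also have "\<dots> = complex_of_real (sqrt (2*pi)) * (\<integral>s. acorr h (\<sigma> * s) * complex_of_real (exp (-s\<^sup>2/2)) \<partial>lborel)"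
  proof -
    have "(\<integral>s. acorr h (0 + \<sigma> * s) * complex_of_real (sqrt (2*pi) / \<sigma> * exp (-((0 + \<sigma> * s)/\<sigma>)\<^sup>2/2)) \<partial>lborel)
       = (\<integral>s. complex_of_real (sqrt (2*pi) / \<sigma>) * (acorr h (\<sigma> * s) * complex_of_real (exp (-s\<^sup>2/2))) \<partial>lborel)"
      using \<sigma> by (intro Bochner_Integration.integral_cong refl) (simp add: ac_simps)
    also have "\<dots> = complex_of_real (sqrt (2*pi) / \<sigma>) * (\<integral>s. acorr h (\<sigma> * s) * complex_of_real (exp (-s\<^sup>2/2)) \<partial>lborel)"
      by simp
    finally show ?thesis using \<sigma> by (simp add: scaleR_conv_of_real)
  qed
  finally have "(\<integral>\<xi>. complex_of_real (g \<xi>) * (fourier_L1 h \<xi> * cnj (fourier_L1 h \<xi>)) \<partial>lborel)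
     = complex_of_real (1/(2*pi) * sqrt (2*pi)) * (\<integral>s. acorr h (\<sigma> * s) * complex_of_real (exp (-s\<^sup>2/2)) \<partial>lborel)"
    by simp
  also have "\<dots> = (\<integral>s. complex_of_real (1/(2*pi) * sqrt (2*pi)) * (acorr h (\<sigma> * s) * complex_of_real (exp (-s\<^sup>2/2))) \<partial>lborel)"
    by simp
  also have "\<dots> = (\<integral>s. acorr h (\<sigma> * s) * complex_of_real (std_normal_density s) \<partial>lborel)"
  proof (intro Bochner_Integration.integral_cong refl)
    fix s :: real
    have "1/(2*pi) * sqrt (2*pi) = 1 / sqrt (2*pi)"
      using pi_gt_zero by (simp add: field_simps)
    then show "complex_of_real (1/(2*pi) * sqrt (2*pi)) * (acorr h (\<sigma> * s) * complex_of_real (exp (-s\<^sup>2/2))) = acorr h (\<sigma> * s) * complex_of_real (std_normal_density s)"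
      by (simp add: std_normal_density_def)
  qed
  finally show ?thesis unfolding g_def .
qed

lemma fourier_meas[measurable]:
  assumes [measurable]: "h \<in> borel_measurable borel"
  shows "fourier_L1 h \<in> borel_measurable borel"
proof -
  have "(\<lambda>\<xi>. \<integral>x. h x * E \<xi> x \<partial>lborel) \<in> borel_measurable lborel"
    by measurable
  then show ?thesis unfolding fourier_E[abs_def] by simp
qed

lemma fourier_bound:
  assumes hi: "integrable lborel h"
  shows "cmod (fourier_L1 h \<xi>) \<le> 1 / sqrt (2*pi) * (\<integral>x. cmod (h x) \<partial>lborel)"
proof -
  have "cmod (\<integral>x. h x * E \<xi> x \<partial>lborel) \<le> (\<integral>x. cmod (h x * E \<xi> x) \<partial>lborel)"
    by (rule integral_norm_bound)
  also have "\<dots> = (\<integral>x. cmod (h x) \<partial>lborel)" by (simp add: norm_mult)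
  finally have X: "cmod (\<integral>x. h x * E \<xi> x \<partial>lborel) \<le> (\<integral>x. cmod (h x) \<partial>lborel)" .
  have "cmod (fourier_L1 h \<xi>) = \<bar>1 / sqrt (2*pi)\<bar> * cmod (\<integral>x. h x * E \<xi> x \<partial>lborel)"
    by (simp only: fourier_E norm_mult norm_of_real)
  also have "\<dots> \<le> \<bar>1 / sqrt (2*pi)\<bar> * (\<integral>x. cmod (h x) \<partial>lborel)"
    by (intro mult_left_mono X) auto
  finally show ?thesis by simp
qed

lemma std_normal_int1: "(\<integral>s. std_normal_density s \<partial>lborel) = 1"
  using integral_std_normal_moment_even[of 0] by simp

lemma plancherel_L1:
  assumes hi: "integrable lborel h" and h: "L2 h"
  shows "NN (fourier_L1 h) = NN h"
proof -
  have hm[measurable]: "h \<in> borel_measurable borel" and hf: "NN h < \<infinity>" using h by (auto simp: L2_iff)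
  have Ai: "integrable lborel (acorr h)" by (rule acorr_int[OF hi hm])
  have Am[measurable]: "acorr h \<in> borel_measurable borel" using Ai by (auto dest: borel_measurable_integrable)
  define \<sigma> where "\<sigma> = (\<lambda>k::nat. 1 / (real k + 1))"
  have \<sigma>: "\<sigma> k > 0" for k by (simp add: \<sigma>_def)
  have \<sigma>0: "\<sigma> \<longlonglongrightarrow> 0" using LIMSEQ_inverse_real_of_nat by (simp add: \<sigma>_def inverse_eq_divide add.commute)
  define g where "g = (\<lambda>k \<xi>. exp (-(\<sigma> k * \<xi>)\<^sup>2/2))"
  define F where "F = fourier_L1 h"
  have Fm[measurable]: "F \<in> borel_measurable borel" unfolding F_def by measurable
  define B where "B = 1 / sqrt (2*pi) * (\<integral>x. cmod (h x) \<partial>lborel)"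
  have FB: "cmod (F \<xi>) \<le> B" for \<xi> unfolding F_def B_def by (rule fourier_bound[OF hi])
  define R where "R = (\<lambda>k. \<integral>\<xi>. g k \<xi> * (cmod (F \<xi>))\<^sup>2 \<partial>lborel)"
  have gi: "integrable lborel (g k)" for k unfolding g_def by (rule gauss_int[OF \<sigma>])
  have gm[measurable]: "g k \<in> borel_measurable borel" for k using gi[of k] by (auto dest: borel_measurable_integrable)
  have gpos: "g k \<xi> \<ge> 0" for k \<xi> by (simp add: g_def)
  have Ri: "integrable lborel (\<lambda>\<xi>. g k \<xi> * (cmod (F \<xi>))\<^sup>2)" for k
  proof (rule Bochner_Integration.integrable_bound[where f="\<lambda>\<xi>. B\<^sup>2 * g k \<xi>"])
    show "integrable lborel (\<lambda>\<xi>. B\<^sup>2 * g k \<xi>)" using gi[of k] by simp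
    show "AE \<xi> in lborel. norm (g k \<xi> * (cmod (F \<xi>))\<^sup>2) \<le> norm (B\<^sup>2 * g k \<xi>)"
    proof (intro AE_I2)
      fix \<xi>
      have "(cmod (F \<xi>))\<^sup>2 \<le> B\<^sup>2" using FB[of \<xi>] by (intro power_mono) auto
      then show "norm (g k \<xi> * (cmod (F \<xi>))\<^sup>2) \<le> norm (B\<^sup>2 * g k \<xi>)"
        using gpos[of k \<xi>] by (simp add: abs_mult mult.commute mult_left_mono)
    qed
  qed simp
  have "(\<lambda>k. complex_of_real (R k)) \<longlonglongrightarrow> acorr h 0"
  proof -
    have eq: "complex_of_real (R k) = (\<integral>s. acorr h (\<sigma> k * s) * complex_of_real (std_normal_density s) \<partial>lborel)" for k
    proof -
      have "complex_of_real (R k) = (\<integral>\<xi>. complex_of_real (g k \<xi> * (cmod (F \<xi>))\<^sup>2) \<partial>lborel)"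
        unfolding R_def by (rule integral_complex_of_real[symmetric])
      also have "\<dots> = (\<integral>\<xi>. complex_of_real (exp (-(\<sigma> k*\<xi>)\<^sup>2/2)) * (fourier_L1 h \<xi> * cnj (fourier_L1 h \<xi>)) \<partial>lborel)"
        by (intro Bochner_Integration.integral_cong refl) (simp add: g_def F_def complex_mult_cnj cmod_power2)
      also have "\<dots> = (\<integral>s. acorr h (\<sigma> k * s) * complex_of_real (std_normal_density s) \<partial>lborel)"
        by (rule D2[OF hi hm \<sigma>])
      finally show ?thesis .
    qed
    have "(\<lambda>k. \<integral>s. acorr h (\<sigma> k * s) * complex_of_real (std_normal_density s) \<partial>lborel)
        \<longlonglongrightarrow> (\<integral>s. acorr h 0 * complex_of_real (std_normal_density s) \<partial>lborel)"
    proof (rule integral_dominated_convergence[where w="\<lambda>s. enn2real (NN h) * std_normal_density s"])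
      show "integrable lborel (\<lambda>s. enn2real (NN h) * std_normal_density s)" by simp
      show "AE s in lborel. (\<lambda>k. acorr h (\<sigma> k * s) * complex_of_real (std_normal_density s)) \<longlonglongrightarrow> acorr h 0 * complex_of_real (std_normal_density s)"
      proof (intro AE_I2 tendsto_intros)
        fix s :: real
        have "(\<lambda>k. \<sigma> k * s) \<longlonglongrightarrow> 0 * s" by (intro tendsto_intros \<sigma>0)
        then have "(\<lambda>k. \<sigma> k * s) \<longlonglongrightarrow> 0" by simp
        then show "(\<lambda>k. acorr h (\<sigma> k * s)) \<longlonglongrightarrow> acorr h 0"
          by (rule isCont_tendsto_compose[OF acorr_cont[OF h]])
      qed
      show "AE s in lborel. norm (acorr h (\<sigma> k * s) * complex_of_real (std_normal_density s)) \<le> enn2real (NN h) * std_normal_density s" for k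
        using acorr_bound(2)[OF h, of "\<sigma> k * s"]
        by (intro AE_I2) (simp add: norm_mult normal_density_nonneg mult_right_mono acorr_bound(2)[OF h])
    qed auto
    also have "(\<integral>s. acorr h 0 * complex_of_real (std_normal_density s) \<partial>lborel) = acorr h 0"
      using std_normal_int1 by simp
    finally show ?thesis unfolding eq .
  qed
  then have "(\<lambda>k. Re (complex_of_real (R k))) \<longlonglongrightarrow> Re (acorr h 0)" by (rule tendsto_Re)
  then have RL: "(\<lambda>k. R k) \<longlonglongrightarrow> enn2real (NN h)" by (simp add: acorr_0[OF hm])
  have nnR: "(\<integral>\<^sup>+\<xi>. ennreal (g k \<xi> * (cmod (F \<xi>))\<^sup>2) \<partial>lborel) = ennreal (R k)" for k
    unfolding R_def by (rule nn_integral_eq_integral[OF Ri]) (simp add: gpos)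
  have mono: "incseq (\<lambda>k \<xi>. ennreal (g k \<xi> * (cmod (F \<xi>))\<^sup>2))"
  proof (intro incseq_SucI le_funI ennreal_leI mult_right_mono)
    fix k \<xi>
    have "(\<sigma> (Suc k) * \<xi>)\<^sup>2 \<le> (\<sigma> k * \<xi>)\<^sup>2"
      unfolding power_mult_distrib by (intro mult_right_mono power_mono) (auto simp: \<sigma>_def divide_simps)
    then show "g k \<xi> \<le> g (Suc k) \<xi>" unfolding g_def by simp
  qed simp
  have "(\<lambda>k. \<integral>\<^sup>+\<xi>. ennreal (g k \<xi> * (cmod (F \<xi>))\<^sup>2) \<partial>lborel) \<longlonglongrightarrow> (\<integral>\<^sup>+\<xi>. ennreal ((cmod (F \<xi>))\<^sup>2) \<partial>lborel)"
  proof (rule nn_integral_LIMSEQ[OF mono])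
    show "(\<lambda>\<xi>. ennreal (g k \<xi> * (cmod (F \<xi>))\<^sup>2)) \<in> borel_measurable lborel" for k by measurable
    fix \<xi> :: real
    have "(\<lambda>k. g k \<xi>) \<longlonglongrightarrow> exp (-(0 * \<xi>)\<^sup>2/2)" unfolding g_def by (intro tendsto_intros \<sigma>0) auto
    then have "(\<lambda>k. g k \<xi>) \<longlonglongrightarrow> 1" by simp
    then have "(\<lambda>k. g k \<xi> * (cmod (F \<xi>))\<^sup>2) \<longlonglongrightarrow> 1 * (cmod (F \<xi>))\<^sup>2" by (intro tendsto_intros)
    then show "(\<lambda>k. ennreal (g k \<xi> * (cmod (F \<xi>))\<^sup>2)) \<longlonglongrightarrow> ennreal ((cmod (F \<xi>))\<^sup>2)"
      by (intro tendsto_ennrealI) simp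
  qed
  then have L1: "(\<lambda>k. ennreal (R k)) \<longlonglongrightarrow> NN F" unfolding nnR NN_def .
  have L2: "(\<lambda>k. ennreal (R k)) \<longlonglongrightarrow> ennreal (enn2real (NN h))" using RL by (rule tendsto_ennrealI)
  have "NN F = ennreal (enn2real (NN h))" using L1 L2 by (rule LIMSEQ_unique)
  also have "\<dots> = NN h" using hf by simp
  finally show ?thesis unfolding F_def .
qed

lemma L2norm_triangle:
  assumes a: "L2 a" and b: "L2 b"
  shows "L2norm (\<lambda>x. a x + b x) \<le> L2norm a + L2norm b"
proof -
  have am[measurable]: "a \<in> borel_measurable borel" and af: "NN a < \<infinity>" using a by (auto simp: L2_iff)
  have bm[measurable]: "b \<in> borel_measurable borel" and bf: "NN b < \<infinity>" using b by (auto simp: L2_iff)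
  define X where "X = (\<integral>\<^sup>+x. ennreal (cmod (a x) * cmod (b x)) \<partial>lborel)"
  have X2: "X^2 \<le> NN a * NN b" unfolding X_def by (rule CS) auto
  have "NN a * NN b < \<infinity>" using af bf by (simp add: ennreal_mult_less_top)
  then have "X^2 < \<infinity>" using X2 by (rule le_less_trans[rotated])
  then have Xf: "X < \<infinity>" by (simp add: power_less_top_ennreal)
  have Xr: "enn2real X \<le> sqrt (enn2real (NN a) * enn2real (NN b))"
  proof (rule real_le_rsqrt)
    have "(enn2real X)^2 = enn2real (X^2)" by (simp add: power2_eq_square enn2real_mult)
    also have "\<dots> \<le> enn2real (NN a * NN b)"
      using X2 \<open>NN a * NN b < \<infinity>\<close> by (intro enn2real_mono) auto
    also have "\<dots> = enn2real (NN a) * enn2real (NN b)" by (simp add: enn2real_mult)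
    finally show "(enn2real X)^2 \<le> enn2real (NN a) * enn2real (NN b)" .
  qed
  have "NN (\<lambda>x. a x + b x) \<le> (\<integral>\<^sup>+x. ennreal ((cmod (a x))\<^sup>2) + 2 * ennreal (cmod (a x) * cmod (b x)) + ennreal ((cmod (b x))\<^sup>2) \<partial>lborel)"
    unfolding NN_def
  proof (intro nn_integral_mono)
    fix x
    have "(cmod (a x + b x))\<^sup>2 \<le> (cmod (a x) + cmod (b x))\<^sup>2"
      by (intro power_mono norm_triangle_ineq) auto
    also have "\<dots> = (cmod (a x))\<^sup>2 + 2 * (cmod (a x) * cmod (b x)) + (cmod (b x))\<^sup>2"
      by (simp add: power2_sum)
    finally have "ennreal ((cmod (a x + b x))\<^sup>2) \<le> ennreal ((cmod (a x))\<^sup>2 + 2 * (cmod (a x) * cmod (b x)) + (cmod (b x))\<^sup>2)"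
      by (rule ennreal_leI)
    also have "\<dots> = ennreal ((cmod (a x))\<^sup>2) + ennreal (2 * (cmod (a x) * cmod (b x))) + ennreal ((cmod (b x))\<^sup>2)"
      by (simp del: ennreal_mult ennreal_mult')
    also have "ennreal (2 * (cmod (a x) * cmod (b x))) = 2 * ennreal (cmod (a x) * cmod (b x))"
      by (subst ennreal_mult) auto
    finally show "ennreal ((cmod (a x + b x))\<^sup>2) \<le> ennreal ((cmod (a x))\<^sup>2) + 2 * ennreal (cmod (a x) * cmod (b x)) + ennreal ((cmod (b x))\<^sup>2)" .
  qed
  also have "\<dots> = NN a + 2 * X + NN b" unfolding NN_def X_def
    by (subst nn_integral_add, simp, simp)+ (auto simp: nn_integral_cmult)
  finally have le: "NN (\<lambda>x. a x + b x) \<le> NN a + 2 * X + NN b" .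
  have "enn2real (NN (\<lambda>x. a x + b x)) \<le> enn2real (NN a + 2 * X + NN b)"
    using le af bf Xf by (intro enn2real_mono) (auto simp: ennreal_mult_less_top)
  also have "\<dots> = enn2real (NN a) + 2 * enn2real X + enn2real (NN b)"
    using af bf Xf by (simp add: enn2real_plus ennreal_mult_less_top enn2real_mult)
  also have "\<dots> \<le> enn2real (NN a) + 2 * sqrt (enn2real (NN a) * enn2real (NN b)) + enn2real (NN b)"
    using Xr by simp
  also have "\<dots> = (sqrt (enn2real (NN a)) + sqrt (enn2real (NN b)))\<^sup>2"
    by (simp add: power2_sum real_sqrt_mult)
  finally have "sqrt (enn2real (NN (\<lambda>x. a x + b x))) \<le> sqrt (enn2real (NN a)) + sqrt (enn2real (NN b))"
    by (simp add: real_le_lsqrt real_sqrt_le_iff real_le_rsqrt)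
  then show ?thesis by (simp add: L2norm_NN)
qed

lemma L2norm_diff_abs:
  assumes a: "L2 a" and b: "L2 b"
  shows "\<bar>L2norm a - L2norm b\<bar> \<le> L2norm (\<lambda>x. a x - b x)"
proof -
  have ab: "L2 (\<lambda>x. a x - b x)" and ba: "L2 (\<lambda>x. b x - a x)" using L2_diff a b by auto
  have "L2norm a \<le> L2norm (\<lambda>x. a x - b x) + L2norm b"
    using L2norm_triangle[OF ab b] by simp
  moreover have "L2norm b \<le> L2norm (\<lambda>x. b x - a x) + L2norm a"
    using L2norm_triangle[OF ba a] by simp
  moreover have "L2norm (\<lambda>x. b x - a x) = L2norm (\<lambda>x. a x - b x)"
    unfolding L2norm_def by (simp add: norm_minus_commute)
  ultimately show ?thesis by linarith
qed

lemma L2_uminus: "L2 b \<Longrightarrow> L2 (\<lambda>x. - b x)"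
  by (simp add: L2_iff NN_def)

lemma L2norm_diff_triangle:
  assumes a: "L2 a" and b: "L2 b"
  shows "L2norm (\<lambda>x. a x - b x) \<le> L2norm a + L2norm b"
proof -
  have "L2norm (\<lambda>x. a x + - b x) \<le> L2norm a + L2norm (\<lambda>x. - b x)"
    by (rule L2norm_triangle[OF a L2_uminus[OF b]])
  moreover have "L2norm (\<lambda>x. - b x) = L2norm b" by (simp add: L2norm_def)
  ultimately show ?thesis by simp
qed

lemma trunc_int:
  fixes f :: "real \<Rightarrow> complex"
  assumes f: "L2 f"
  shows "integrable lborel (\<lambda>x. indicator {- real n..real n} x * f x)" "L2 (\<lambda>x. indicator {- real n..real n} x * f x)"
proof -
  have fm[measurable]: "f \<in> borel_measurable borel" and ff: "NN f < \<infinity>" using f by (auto simp: L2_iff)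
  have nrm: "cmod (indicator {- real n..real n} x * f x) = indicator {- real n..real n} x * cmod (f x)" for x
    by (simp add: norm_mult split: split_indicator)
  have "(\<integral>\<^sup>+x. ennreal (cmod (indicator {- real n..real n} x * f x)) \<partial>lborel)
      \<le> (\<integral>\<^sup>+x. ennreal (indicator {- real n..real n} x) + ennreal ((cmod (f x))\<^sup>2) \<partial>lborel)"
  proof (intro nn_integral_mono)
    fix x
    have t: "cmod (f x) \<le> 1 + (cmod (f x))\<^sup>2"
    proof (cases "cmod (f x) \<le> 1")
      case True then show ?thesis by (smt (verit) zero_le_power2)
    next
      case False then have "cmod (f x) \<le> cmod (f x) * cmod (f x)" by (simp add: le_square mult_le_cancel_left1)
      then show ?thesis by (simp add: power2_eq_square)
    qed
    have "indicator {- real n..real n} x * cmod (f x) \<le> indicator {- real n..real n} x + (cmod (f x))\<^sup>2"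
      using t by (auto split: split_indicator)
    then show "ennreal (cmod (indicator {- real n..real n} x * f x)) \<le> ennreal (indicator {- real n..real n} x) + ennreal ((cmod (f x))\<^sup>2)"
      unfolding nrm by (simp add: ennreal_plus[symmetric] del: ennreal_plus)
  qed
  also have "\<dots> = ennreal (2 * real n) + NN f"
    unfolding NN_def by (subst nn_integral_add) (auto simp: ennreal_indicator)
  also have "\<dots> < \<infinity>" using ff by simp
  finally show "integrable lborel (\<lambda>x. indicator {- real n..real n} x * f x)"
    unfolding integrable_iff_bounded by simp
  have "NN (\<lambda>x. indicator {- real n..real n} x * f x) \<le> NN f"
    unfolding NN_def nrm
    by (intro nn_integral_mono ennreal_leI power_mono) (auto split: split_indicator)
  then show "L2 (\<lambda>x. indicator {- real n..real n} x * f x)"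
    using ff unfolding L2_iff by (auto intro: le_less_trans)
qed

lemma int_E: "integrable lborel u \<Longrightarrow> integrable lborel (\<lambda>x. u x * E \<xi> x)"
  by (rule Bochner_Integration.integrable_bound[where f=u]) (auto simp: norm_mult dest: borel_measurable_integrable)

lemma fourier_diff:
  assumes "integrable lborel u" "integrable lborel v"
  shows "fourier_L1 (\<lambda>x. u x - v x) \<xi> = fourier_L1 u \<xi> - fourier_L1 v \<xi>"
proof -
  have "(\<integral>x. (u x - v x) * E \<xi> x \<partial>lborel) = (\<integral>x. u x * E \<xi> x - v x * E \<xi> x \<partial>lborel)"
    by (simp add: left_diff_distrib)
  also have "\<dots> = (\<integral>x. u x * E \<xi> x \<partial>lborel) - (\<integral>x. v x * E \<xi> x \<partial>lborel)"
    by (rule Bochner_Integration.integral_diff[OF int_E[OF assms(1)] int_E[OF assms(2)]])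
  finally show ?thesis unfolding fourier_E by (simp add: right_diff_distrib)
qed

lemma K:
  assumes Ff: "fourier_L2 f g" and Ff': "fourier_L2 f' g'"
  shows "L2norm (\<lambda>x. f x - f' x) = L2norm (\<lambda>x. g x - g' x)"
proof -
  have f: "L2 f" and g: "L2 g" and af: "(\<lambda>n::nat. L2norm (\<lambda>\<xi>. fourier_L1 (\<lambda>x. indicator {- real n .. real n} x * f x) \<xi> - g \<xi>)) \<longlonglongrightarrow> 0"
    using Ff by (auto simp: fourier_L2_def)
  have f': "L2 f'" and g': "L2 g'" and af': "(\<lambda>n::nat. L2norm (\<lambda>\<xi>. fourier_L1 (\<lambda>x. indicator {- real n .. real n} x * f' x) \<xi> - g' \<xi>)) \<longlonglongrightarrow> 0"
    using Ff' by (auto simp: fourier_L2_def)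
  have [measurable]: "f \<in> borel_measurable borel" "f' \<in> borel_measurable borel" using f f' by (auto simp: L2_iff)
  define T where "T = (\<lambda>(n::nat) (u::real \<Rightarrow> complex) x. indicator {- real n .. real n} x * u x)"
  define hn where "hn = (\<lambda>n x. T n f x - T n f' x)"
  have Tf: "integrable lborel (T n f)" "L2 (T n f)" for n unfolding T_def using trunc_int[OF f] by auto
  have Tf': "integrable lborel (T n f')" "L2 (T n f')" for n unfolding T_def using trunc_int[OF f'] by auto
  have FT: "L2 (fourier_L1 (T n u))" if "integrable lborel (T n u)" "L2 (T n u)" for n u
  proof -
    have "T n u \<in> borel_measurable borel" using that by (auto simp: L2_iff)
    then have "fourier_L1 (T n u) \<in> borel_measurable borel" by measurable
    moreover have "NN (fourier_L1 (T n u)) = NN (T n u)" by (rule plancherel_L1[OF that])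
    ultimately show ?thesis using that by (simp add: L2_iff)
  qed
  have hn_int: "integrable lborel (hn n)" for n unfolding hn_def using Tf Tf' by auto
  have hn_L2: "L2 (hn n)" for n unfolding hn_def using Tf Tf' L2_diff by auto
  have hn_m[measurable]: "hn n \<in> borel_measurable borel" for n using hn_L2 by (auto simp: L2_iff)
  have Fhn: "fourier_L1 (hn n) \<xi> = fourier_L1 (T n f) \<xi> - fourier_L1 (T n f') \<xi>" for n \<xi>
    unfolding hn_def by (rule fourier_diff[OF Tf(1) Tf'(1)])
  define a where "a = (\<lambda>n \<xi>. fourier_L1 (T n f) \<xi> - g \<xi>)"
  define b where "b = (\<lambda>n \<xi>. fourier_L1 (T n f') \<xi> - g' \<xi>)"
  have aL: "L2 (a n)" for n unfolding a_def by (intro L2_diff FT Tf g)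
  have bL: "L2 (b n)" for n unfolding b_def by (intro L2_diff FT Tf' g')
  have a0: "(\<lambda>n. L2norm (a n)) \<longlonglongrightarrow> 0" using af unfolding a_def T_def .
  have b0: "(\<lambda>n. L2norm (b n)) \<longlonglongrightarrow> 0" using af' unfolding b_def T_def .
  have gg: "L2 (\<lambda>x. g x - g' x)" by (rule L2_diff[OF g g'])
  have FhnL: "L2 (fourier_L1 (hn n))" for n
  proof -
    have "fourier_L1 (hn n) = (\<lambda>\<xi>. fourier_L1 (T n f) \<xi> - fourier_L1 (T n f') \<xi>)" using Fhn by auto
    then show ?thesis using L2_diff[OF FT[OF Tf] FT[OF Tf']] by simp
  qed
  have lim1: "(\<lambda>n. L2norm (fourier_L1 (hn n))) \<longlonglongrightarrow> L2norm (\<lambda>x. g x - g' x)"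
  proof (rule LIM_zero_cancel, rule Lim_null_comparison)
    show "(\<lambda>n. L2norm (a n) + L2norm (b n)) \<longlonglongrightarrow> 0" using tendsto_add[OF a0 b0] by simp
    show "\<forall>\<^sub>F n in sequentially. norm (L2norm (fourier_L1 (hn n)) - L2norm (\<lambda>x. g x - g' x)) \<le> L2norm (a n) + L2norm (b n)"
    proof (intro always_eventually allI)
      fix n
      have "norm (L2norm (fourier_L1 (hn n)) - L2norm (\<lambda>x. g x - g' x)) \<le> L2norm (\<lambda>\<xi>. fourier_L1 (hn n) \<xi> - (g \<xi> - g' \<xi>))"
        using L2norm_diff_abs[OF FhnL gg] by simp
      also have "(\<lambda>\<xi>. fourier_L1 (hn n) \<xi> - (g \<xi> - g' \<xi>)) = (\<lambda>\<xi>. a n \<xi> - b n \<xi>)"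
        by (auto simp: Fhn a_def b_def)
      also have "L2norm (\<lambda>\<xi>. a n \<xi> - b n \<xi>) \<le> L2norm (a n) + L2norm (b n)"
        by (rule L2norm_diff_triangle[OF aL bL])
      finally show "norm (L2norm (fourier_L1 (hn n)) - L2norm (\<lambda>x. g x - g' x)) \<le> L2norm (a n) + L2norm (b n)" .
    qed
  qed
  have eqn: "L2norm (fourier_L1 (hn n)) = L2norm (hn n)" for n
    using plancherel_L1[OF hn_int hn_L2] by (simp add: L2norm_NN)
  define d where "d = (\<lambda>x. f x - f' x)"
  have dL: "L2 d" unfolding d_def by (rule L2_diff[OF f f'])
  have [measurable]: "d \<in> borel_measurable borel" using dL by (auto simp: L2_iff)
  have hnd: "hn n x = indicator {- real n .. real n} x * d x" for n x
    unfolding hn_def T_def d_def by (simp add: right_diff_distrib)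
  have "(\<lambda>n. NN (hn n)) \<longlonglongrightarrow> NN d"
    unfolding NN_def hnd
  proof (rule nn_integral_LIMSEQ)
    show "incseq (\<lambda>n x. ennreal ((cmod (indicator {- real n .. real n} x * d x))\<^sup>2))"
    proof (intro incseq_SucI le_funI ennreal_leI power_mono)
      fix n x
      show "cmod (indicator {- real n .. real n} x * d x) \<le> cmod (indicator {- real (Suc n) .. real (Suc n)} x * d x)"
        by (auto simp: norm_mult split: split_indicator)
    qed simp
    show "(\<lambda>x. ennreal ((cmod (indicator {- real n .. real n} x * d x))\<^sup>2)) \<in> borel_measurable lborel" for n
      by measurable
    fix x :: real
    obtain N :: nat where N: "\<bar>x\<bar> \<le> real N" using real_arch_simple by blast
    show "(\<lambda>n. ennreal ((cmod (indicator {- real n .. real n} x * d x))\<^sup>2)) \<longlonglongrightarrow> ennreal ((cmod (d x))\<^sup>2)"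
    proof (rule tendsto_eventually)
      show "\<forall>\<^sub>F n in sequentially. ennreal ((cmod (indicator {- real n .. real n} x * d x))\<^sup>2) = ennreal ((cmod (d x))\<^sup>2)"
        unfolding eventually_sequentially using N
        by (intro exI[of _ N] allI impI) (auto simp: indicator_def)
    qed
  qed
  moreover have "NN d = ennreal (enn2real (NN d))" using dL by (simp add: L2_iff)
  ultimately have "(\<lambda>n. NN (hn n)) \<longlonglongrightarrow> ennreal (enn2real (NN d))" by simp
  then have "(\<lambda>n. enn2real (NN (hn n))) \<longlonglongrightarrow> enn2real (NN d)"
    by (rule tendsto_enn2real) simp
  then have "(\<lambda>n. sqrt (enn2real (NN (hn n)))) \<longlonglongrightarrow> sqrt (enn2real (NN d))"
    by (rule tendsto_real_sqrt)
  then have lim2: "(\<lambda>n. L2norm (fourier_L1 (hn n))) \<longlonglongrightarrow> L2norm d"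
    by (simp add: eqn L2norm_NN)
  show ?thesis using LIMSEQ_unique[OF lim2 lim1] unfolding d_def .
qed

lemma powr_le_1_plus:
  fixes y a :: real
  assumes y: "y > 0" and a: "0 \<le> a" "a \<le> 1"
  shows "y powr a \<le> 1 + y"
proof (cases "y \<ge> 1")
  case True
  then have "y powr a \<le> y powr 1" using a by (intro powr_mono) auto
  then show ?thesis using y by simp
next
  case False
  then have "y powr a \<le> 1 powr a" using y a by (intro powr_mono2) auto
  then have "y powr a \<le> 1" by simp
  then show ?thesis using y by simp
qed

lemma mbound:
  fixes T p \<beta> t \<xi> :: real
  assumes T: "T > 0" and p: "p > 1" and \<beta>: "\<beta> > 0" and t: "0 \<le> t" "t \<le> T"
  shows "exp ((T - t) * \<xi>\<^sup>2) / (1 + \<beta> * exp (p * T * \<xi>\<^sup>2)) \<le> \<beta> powr ((t - T) / (p * T))"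
proof -
  define a where "a = (T - t) / (p * T)"
  define s where "s = exp (p * T * \<xi>\<^sup>2)"
  have pT: "p * T > 0" using p T by simp
  have a0: "0 \<le> a" unfolding a_def using t pT by simp
  have "0 \<le> (p - 1) * T" using p T by simp
  moreover have "(p - 1) * T = p * T - T" by (simp add: algebra_simps)
  ultimately have TT: "T - t \<le> p * T" using t by linarith
  have a1: "a \<le> 1" unfolding a_def using TT pT by (simp add: divide_le_eq)
  have s: "s > 0" by (simp add: s_def)
  have e: "exp ((T - t) * \<xi>\<^sup>2) = s powr a"
  proof -
    have pne: "p \<noteq> 0" "T \<noteq> 0" using p T by auto
    have "a * (p * T * \<xi>\<^sup>2) = (T - t) * \<xi>\<^sup>2" unfolding a_def using pne by simp
    moreover have "s powr a = exp (a * ln s)" using s by (simp add: powr_def)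
    moreover have "ln s = p * T * \<xi>\<^sup>2" by (simp add: s_def)
    ultimately show ?thesis by metis
  qed
  have "(\<beta> * s) powr a \<le> 1 + \<beta> * s" using \<beta> s a0 a1 by (intro powr_le_1_plus) auto
  then have "\<beta> powr a * s powr a \<le> 1 + \<beta> * s" using \<beta> s by (simp add: powr_mult)
  then have "s powr a \<le> (1 + \<beta> * s) * \<beta> powr (- a)"
    using \<beta> by (simp add: powr_minus field_simps)
  then have "s powr a / (1 + \<beta> * s) \<le> \<beta> powr (- a)"
    using \<beta> s by (simp add: divide_le_eq mult.commute add_pos_pos)
  moreover have "- a = (t - T) / (p * T)" unfolding a_def by (simp add: minus_divide_left)
  ultimately show ?thesis using e by (simp add: s_def)
qed

lemma L2norm_mult_le:
  assumes u: "L2 u" and [measurable]: "M \<in> borel_measurable borel" and MC: "\<And>\<xi>. \<bar>M \<xi>\<bar> \<le> C"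
  shows "L2norm (\<lambda>\<xi>. complex_of_real (M \<xi>) * u \<xi>) \<le> C * L2norm u"
proof -
  have [measurable]: "u \<in> borel_measurable borel" and uf: "NN u < \<infinity>" using u by (auto simp: L2_iff)
  have C: "C \<ge> 0" using MC[of 0] by simp
  have "NN (\<lambda>\<xi>. complex_of_real (M \<xi>) * u \<xi>) \<le> (\<integral>\<^sup>+\<xi>. ennreal (C\<^sup>2) * ennreal ((cmod (u \<xi>))\<^sup>2) \<partial>lborel)"
    unfolding NN_def
  proof (intro nn_integral_mono)
    fix \<xi>
    have "(cmod (complex_of_real (M \<xi>) * u \<xi>))\<^sup>2 = (\<bar>M \<xi>\<bar>)\<^sup>2 * (cmod (u \<xi>))\<^sup>2"
      by (simp add: norm_mult power_mult_distrib)
    also have "\<dots> \<le> C\<^sup>2 * (cmod (u \<xi>))\<^sup>2"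
      by (intro mult_right_mono power_mono MC) auto
    finally show "ennreal ((cmod (complex_of_real (M \<xi>) * u \<xi>))\<^sup>2) \<le> ennreal (C\<^sup>2) * ennreal ((cmod (u \<xi>))\<^sup>2)"
      by (simp add: ennreal_mult[symmetric] ennreal_leI)
  qed
  also have "\<dots> = ennreal (C\<^sup>2) * NN u" unfolding NN_def by (rule nn_integral_cmult) auto
  finally have le: "NN (\<lambda>\<xi>. complex_of_real (M \<xi>) * u \<xi>) \<le> ennreal (C\<^sup>2) * NN u" .
  have "enn2real (NN (\<lambda>\<xi>. complex_of_real (M \<xi>) * u \<xi>)) \<le> enn2real (ennreal (C\<^sup>2) * NN u)"
    using le uf by (intro enn2real_mono) (auto simp: ennreal_mult_less_top)
  also have "\<dots> = C\<^sup>2 * enn2real (NN u)" by (simp add: enn2real_mult)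
  finally have "sqrt (enn2real (NN (\<lambda>\<xi>. complex_of_real (M \<xi>) * u \<xi>))) \<le> sqrt (C\<^sup>2 * enn2real (NN u))"
    by (rule real_sqrt_le_mono)
  also have "\<dots> = C * sqrt (enn2real (NN u))" using C by (simp add: real_sqrt_mult)
  finally show ?thesis by (simp add: L2norm_NN)
qed

theorem theorem1:
  fixes T p \<beta> :: real and \<phi> \<omega> :: "real \<Rightarrow> complex" and w v :: "real \<Rightarrow> real \<Rightarrow> complex"
  assumes "T > 0" and "p > 1" and "\<beta> > 0"
    and "L2 \<phi>" and "L2 \<omega>"
    and "reg_solution T p \<beta> \<phi> w" and "reg_solution T p \<beta> \<omega> v"
  shows "\<forall>t\<in>{0..T}. L2norm (\<lambda>x. w x t - v x t) \<le> \<beta> powr ((t - T) / (p * T)) * L2norm (\<lambda>x. \<phi> x - \<omega> x)"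
proof
  fix t assume t: "t \<in> {0..T}"
  obtain \<phi>h where F\<phi>: "fourier_L2 \<phi> \<phi>h" and W: "\<forall>t\<in>{0..T}. fourier_L2 (\<lambda>x. w x t)
        (\<lambda>\<xi>. complex_of_real (exp ((T - t) * \<xi>\<^sup>2) / (1 + \<beta> * exp (p * T * \<xi>\<^sup>2))) * \<phi>h \<xi>)"
    using assms(6) unfolding reg_solution_def by blast
  obtain \<omega>h where F\<omega>: "fourier_L2 \<omega> \<omega>h" and V: "\<forall>t\<in>{0..T}. fourier_L2 (\<lambda>x. v x t)
        (\<lambda>\<xi>. complex_of_real (exp ((T - t) * \<xi>\<^sup>2) / (1 + \<beta> * exp (p * T * \<xi>\<^sup>2))) * \<omega>h \<xi>)"
    using assms(7) unfolding reg_solution_def by blast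
  define m where "m = (\<lambda>\<xi>. exp ((T - t) * \<xi>\<^sup>2) / (1 + \<beta> * exp (p * T * \<xi>\<^sup>2)))"
  define C where "C = \<beta> powr ((t - T) / (p * T))"
  have mm[measurable]: "m \<in> borel_measurable borel" unfolding m_def by measurable
  have mC: "\<bar>m \<xi>\<bar> \<le> C" for \<xi>
  proof -
    have "m \<xi> \<ge> 0" unfolding m_def using assms(3) by (simp add: add_pos_pos less_imp_le)
    then have "\<bar>m \<xi>\<bar> = m \<xi>" by (rule abs_of_nonneg)
    moreover have "m \<xi> \<le> C" unfolding m_def C_def using mbound[OF assms(1-3), of t \<xi>] t by simp
    ultimately show ?thesis by simp
  qed
  have uL: "L2 (\<lambda>\<xi>. \<phi>h \<xi> - \<omega>h \<xi>)" using F\<phi> F\<omega> by (intro L2_diff) (auto simp: fourier_L2_def)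
  have "L2norm (\<lambda>x. w x t - v x t) = L2norm (\<lambda>\<xi>. complex_of_real (m \<xi>) * \<phi>h \<xi> - complex_of_real (m \<xi>) * \<omega>h \<xi>)"
    using K[OF W[rule_format, OF t] V[rule_format, OF t]] unfolding m_def .
  also have "(\<lambda>\<xi>. complex_of_real (m \<xi>) * \<phi>h \<xi> - complex_of_real (m \<xi>) * \<omega>h \<xi>) = (\<lambda>\<xi>. complex_of_real (m \<xi>) * (\<phi>h \<xi> - \<omega>h \<xi>))"
    by (simp add: right_diff_distrib)
  also have "L2norm \<dots> \<le> C * L2norm (\<lambda>\<xi>. \<phi>h \<xi> - \<omega>h \<xi>)"
    by (rule L2norm_mult_le[OF uL mm mC])
  also have "L2norm (\<lambda>\<xi>. \<phi>h \<xi> - \<omega>h \<xi>) = L2norm (\<lambda>x. \<phi> x - \<omega> x)"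
    using K[OF F\<phi> F\<omega>] by simp
  finally show "L2norm (\<lambda>x. w x t - v x t) \<le> \<beta> powr ((t - T) / (p * T)) * L2norm (\<lambda>x. \<phi> x - \<omega> x)"
    unfolding C_def .
qed

end
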